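(* Let $X\subseteq\mathbb{R}^d$ be a finite set of arms with $\|x\|_2\le1$ for all $x\in X$. Let $\theta^*\in\mathbb{R}^d$ be such that $x_*=\arg\max_{x\in X}x^\top\theta^*$ is unique, and for $x\in X$ set $\Delta_x=(x_*-x)^\top\theta^*$. Then for every $L>0$, $$L\cdot\rho\big(\mathcal{Y}(\{z\in X:\Delta_z\le 15/\sqrt L\})\big)\le 900\,\psi^*.$$
   Context: For $S\subseteq X$, $\mathcal{Y}(S)=\{x-x':x,x'\in S,\ x\ne x'\}$. Let $\Delta^X=\{\lambda\in\mathbb{R}^{|X|}:\lambda\ge0,\ \sum_{x\in X}\lambda_x=1\}$, and for $\lambda\in\Delta^X$ let $A(\lambda)=\sum_{x\in X}\lambda_xxx^\top$. Write $\|y\|_M^2=y^\top My$. For a set $A\subseteq\mathbb{R}^d$, the optimal design value is $\rho(A)=\min_{\lambda\in\Delta^X}\max_{y\in A}\|y\|^2_{A(\lambda)^{-1}}$. The instance complexity is $$\psi^*=\min_{\lambda\in\Delta^X}\max_{x\in X\setminus\{x_*\}}\frac{\|x-x_*\|^2_{A(\lambda)^{-1}}}{\big((x_*-x)^\top\theta^*\big)^2}.$$ *)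

theory Defs
  imports "HOL-Analysis.Analysis"
begin

definition diffset :: "(real^'d) set \<Rightarrow> (real^'d) set" where
  "diffset S = {x - x' | x x'. x \<in> S \<and> x' \<in> S \<and> x \<noteq> x'}"

text \<open>The design_simplex over the finite arm set X (weights indexed by arms; values off X are irrelevant).\<close>
definition design_simplex :: "(real^'d) set \<Rightarrow> ((real^'d) \<Rightarrow> real) set" where
  "design_simplex X = {lam. (\<forall>x\<in>X. 0 \<le> lam x) \<and> (\<Sum>x\<in>X. lam x) = 1}"

definition outer :: "real^'d \<Rightarrow> real^'d^'d" where
  "outer x = (\<chi> i j. x $ i * x $ j)"

definition design :: "(real^'d) set \<Rightarrow> ((real^'d) \<Rightarrow> real) \<Rightarrow> real^'d^'d" where
  "design X lam = (\<Sum>x\<in>X. lam x *\<^sub>R outer x)"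

text \<open>||y||^2_{A^{-1}}, defined variationally as sup_u (2 u.y - u^T A u).
  For invertible positive definite A this equals y^T A^{-1} y; for singular PSD A it is
  y^T A^+ y if y is in the range of A and +infinity otherwise.\<close>
definition invnorm2 :: "real^'d^'d \<Rightarrow> real^'d \<Rightarrow> ereal" where
  "invnorm2 A y = (SUP u. ereal (2 * (u \<bullet> y) - u \<bullet> (A *v u)))"

definition rho :: "(real^'d) set \<Rightarrow> (real^'d) set \<Rightarrow> ereal" where
  "rho X B = (INF lam\<in>design_simplex X. SUP y\<in>B. invnorm2 (design X lam) y)"

definition psi_star :: "(real^'d) set \<Rightarrow> real^'d \<Rightarrow> real^'d \<Rightarrow> ereal" where
  "psi_star X \<theta> xs = (INF lam\<in>design_simplex X. SUP x\<in>X - {xs}.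
      invnorm2 (design X lam) (x - xs) / ereal (((xs - x) \<bullet> \<theta>)\<^sup>2))"

end

theory Submission
  imports Defs
begin

lemma invnorm2_nonneg: "0 \<le> invnorm2 A y"
  unfolding invnorm2_def
  by (rule order_trans[OF _ SUP_upper[of 0]]) auto

lemma mv_neg: "(A::real^'n^'m) *v (- u) = - (A *v u)"
  by (simp add: vec_eq_iff matrix_vector_mult_def sum_negf)

lemma invnorm2_neg_le: "invnorm2 A (- y) \<le> invnorm2 A y"
  unfolding invnorm2_def
proof (rule SUP_least)
  fix u
  have "ereal (2 * (u \<bullet> (- y)) - u \<bullet> (A *v u)) = ereal (2 * ((- u) \<bullet> y) - (- u) \<bullet> (A *v (- u)))"
    by (simp add: mv_neg)
  also have "\<dots> \<le> (SUP u. ereal (2 * (u \<bullet> y) - u \<bullet> (A *v u)))" by (rule SUP_upper) auto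
  finally show "ereal (2 * (u \<bullet> (- y)) - u \<bullet> (A *v u)) \<le> \<dots>" .
qed

lemma invnorm2_neg: "invnorm2 A (- y) = invnorm2 A y"
  using invnorm2_neg_le[of A y] invnorm2_neg_le[of A "- y"] by simp

lemma invnorm2_add:
  fixes A :: "real^'n^'n" and a b :: "real^'n"
  shows "invnorm2 A (a + b) \<le> 2 * invnorm2 A a + 2 * invnorm2 A b"
  unfolding invnorm2_def
proof (rule SUP_least)
  fix u :: "real^'n"
  let ?v = "(1/2) *\<^sub>R u"
  have e: "2 * (u \<bullet> (a + b)) - u \<bullet> (A *v u) =
     2 * (2 * (?v \<bullet> a) - ?v \<bullet> (A *v ?v)) + 2 * (2 * (?v \<bullet> b) - ?v \<bullet> (A *v ?v))"
    by (simp add: inner_add_right matrix_vector_mult_scaleR algebra_simps)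
  have 1: "ereal (2 * (?v \<bullet> a) - ?v \<bullet> (A *v ?v)) \<le> (SUP u. ereal (2 * (u \<bullet> a) - u \<bullet> (A *v u)))"
    by (rule SUP_upper) auto
  have 2: "ereal (2 * (?v \<bullet> b) - ?v \<bullet> (A *v ?v)) \<le> (SUP u. ereal (2 * (u \<bullet> b) - u \<bullet> (A *v u)))"
    by (rule SUP_upper) auto
  have "ereal (2 * (u \<bullet> (a + b)) - u \<bullet> (A *v u)) =
     2 * ereal (2 * (?v \<bullet> a) - ?v \<bullet> (A *v ?v)) + 2 * ereal (2 * (?v \<bullet> b) - ?v \<bullet> (A *v ?v))"
    by (subst e) simp
  also have "\<dots> \<le> 2 * (SUP u. ereal (2 * (u \<bullet> a) - u \<bullet> (A *v u))) + 2 * (SUP u. ereal (2 * (u \<bullet> b) - u \<bullet> (A *v u)))"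
    by (intro add_mono ereal_mult_left_mono 1 2) auto
  finally show "ereal (2 * (u \<bullet> (a + b)) - u \<bullet> (A *v u)) \<le> \<dots>" .
qed

theorem lemma1:
  fixes X :: "(real^'d) set" and \<theta> xs :: "real^'d" and L :: real
  assumes "finite X"
    and "\<forall>x\<in>X. norm x \<le> 1"
    and "xs \<in> X"
    and "\<forall>x\<in>X. x \<noteq> xs \<longrightarrow> x \<bullet> \<theta> < xs \<bullet> \<theta>"
    and "L > 0"
  shows "ereal L * rho X (diffset {z\<in>X. (xs - z) \<bullet> \<theta> \<le> 15 / sqrt L})
         \<le> 900 * psi_star X \<theta> xs"
proof -
  define S where "S = {z\<in>X. (xs - z) \<bullet> \<theta> \<le> 15 / sqrt L}"
  define g where "g lam = (SUP x\<in>X - {xs}.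
      invnorm2 (design X lam) (x - xs) / ereal (((xs - x) \<bullet> \<theta>)\<^sup>2))" for lam
  define f where "f lam = (SUP y\<in>diffset S. invnorm2 (design X lam) y)" for lam
  let ?c = "ereal L * rho X (diffset S)"
  have Lpos: "0 < L" using assms by simp
  have key: "f lam \<le> ereal (900 / L) * g lam" for lam
  proof -
    let ?A = "design X lam"
    let ?G = "g lam"
    show ?thesis
    proof (cases "X - {xs} = {}")
      case True
      then have "S \<subseteq> {xs}" unfolding S_def by auto
      then have "diffset S = {}" unfolding diffset_def by auto
      then show ?thesis unfolding f_def by simp
    next
      case XF: False
    have G0: "0 \<le> ?G"
    proof -
      show ?thesis
      proof -
        from XF obtain x where x: "x \<in> X - {xs}" by auto
        have "0 \<le> invnorm2 ?A (x - xs) / ereal (((xs - x) \<bullet> \<theta>)\<^sup>2)"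
          by (intro zero_le_divide_ereal invnorm2_nonneg) simp
        also have "\<dots> \<le> ?G" unfolding g_def by (rule SUP_upper[OF x])
        finally show ?thesis .
      qed
    qed
    have one: "invnorm2 ?A (z - xs) \<le> ereal (225 / L) * ?G" if z: "z \<in> S" "z \<noteq> xs" for z
    proof -
      have zX: "z \<in> X" using z S_def by auto
      have dpos: "0 < (xs - z) \<bullet> \<theta>" using assms(4) zX z(2) by (simp add: inner_diff_left)
      have dle: "(xs - z) \<bullet> \<theta> \<le> 15 / sqrt L" using z S_def by auto
      have "((xs - z) \<bullet> \<theta>)\<^sup>2 \<le> (15 / sqrt L)\<^sup>2"
        using dpos dle by (intro power_mono) auto
      also have "\<dots> = 225 / L" using Lpos by (simp add: power_divide)
      finally have d2: "((xs - z) \<bullet> \<theta>)\<^sup>2 \<le> 225 / L" .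
      have "invnorm2 ?A (z - xs) / ereal (((xs - z) \<bullet> \<theta>)\<^sup>2) \<le> ?G"
        unfolding g_def by (rule SUP_upper) (use zX z in auto)
      hence "invnorm2 ?A (z - xs) \<le> ereal (((xs - z) \<bullet> \<theta>)\<^sup>2) * ?G"
        using dpos by (subst (asm) ereal_divide_le_pos) auto
      also have "\<dots> \<le> ereal (225 / L) * ?G"
        using d2 G0 by (intro ereal_mult_right_mono) auto
      finally show ?thesis .
    qed
    have G1: "ereal (225 / L) * ?G \<le> ereal (900 / L) * ?G"
      using G0 Lpos by (intro ereal_mult_right_mono) (auto simp: divide_right_mono)
    show ?thesis unfolding f_def
    proof (rule SUP_least)
      fix y assume "y \<in> diffset S"
      then obtain z z' where y: "y = z - z'" "z \<in> S" "z' \<in> S" "z \<noteq> z'"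
        unfolding diffset_def by auto
      show "invnorm2 ?A y \<le> ereal (900 / L) * ?G"
      proof (cases "z' = xs")
        case True then show ?thesis using one[of z] y G1 by auto
      next
        case z': False
        show ?thesis
        proof (cases "z = xs")
          case True
          have "invnorm2 ?A y = invnorm2 ?A (z' - xs)"
            using invnorm2_neg[of ?A "z' - xs"] True y by simp
          then show ?thesis using one[of z'] y z' G1 by auto
        next
          case False
          have "invnorm2 ?A y = invnorm2 ?A ((z - xs) + (- (z' - xs)))" using y by simp
          also have "\<dots> \<le> 2 * invnorm2 ?A (z - xs) + 2 * invnorm2 ?A (z' - xs)"
            using invnorm2_add[of ?A "z - xs" "- (z' - xs)"] invnorm2_neg[of ?A "z' - xs"] by simp
          also have "\<dots> \<le> 2 * (ereal (225 / L) * ?G) + 2 * (ereal (225 / L) * ?G)"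
            using one[of z] one[of z'] y False z' by (intro add_mono ereal_mult_left_mono) auto
          also have "\<dots> = ereal (900 / L) * ?G"
            by (cases ?G) (auto simp: ereal_mult_infty)
          finally show ?thesis .
        qed
      qed
    qed
    qed
  qed
  have step: "?c \<le> 900 * g lam" if lam: "lam \<in> design_simplex X" for lam
  proof -
    have "rho X (diffset S) \<le> f lam" unfolding rho_def f_def by (rule INF_lower[OF lam])
    hence "?c \<le> ereal L * f lam" using Lpos by (intro ereal_mult_left_mono) auto
    also have "\<dots> \<le> ereal L * (ereal (900 / L) * g lam)"
      using key Lpos by (intro ereal_mult_left_mono) auto
    also have "\<dots> = 900 * g lam"
      using Lpos by (simp add: mult.assoc[symmetric])
    finally show ?thesis .
  qed
  have "?c / 900 \<le> psi_star X \<theta> xs"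
    unfolding psi_star_def
  proof (rule INF_greatest)
    fix lam assume "lam \<in> design_simplex X"
    then have "?c \<le> 900 * g lam" by (rule step)
    then show "?c / 900 \<le> (SUP x\<in>X - {xs}.
      invnorm2 (design X lam) (x - xs) / ereal (((xs - x) \<bullet> \<theta>)\<^sup>2))"
      unfolding g_def by (subst ereal_divide_le_pos) auto
  qed
  then have "?c \<le> 900 * psi_star X \<theta> xs" by (subst (asm) ereal_divide_le_pos) auto
  then show ?thesis unfolding S_def .
qed

end
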